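(* Let $r\ge2$ be an integer and $m,\ell$ positive integers with $2^m>r$ and $2^{m+\ell}>r^2$. Let $z\in\{0,1,\dots,r-1\}$, $j=j_0(z)$, and let $\mathcal L\subset\mathbb R^2$ be the lattice spanned by $(j,\tfrac12)$ and $(2^{m+\ell},0)$. Then, up to sign, the shortest non-zero vector of $\mathcal L$ is unique and equals $\vec u=(\alpha_0(z)/d,\ \tilde r/2)$ where $d=\gcd(r,z)$, $\tilde r=r/d$ and $\alpha_0(z)=rj_0(z)-2^{m+\ell}z$; in particular its second component is $\pm r/(2\gcd(r,z))$.
   Context: For real $f$, $\mathrm{round}(f)$ is the integer $f+\delta_f$ with $\delta_f\in(-1/2,1/2]$. For $z\in\{0,\dots,r-1\}$, $j_0(z)=\mathrm{round}(2^{m+\ell}z/r)$; then $\alpha_0(z)=rj_0(z)-2^{m+\ell}z\in(-r/2,r/2]$. Convention: $\gcd(r,0)=r$. Norms are Euclidean. *)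

theory Defs
  imports "HOL-Analysis.Analysis"
begin

text \<open>round(f) = f + delta with delta in (-1/2,1/2], i.e. rounding half up.\<close>
definition round_hu :: "real \<Rightarrow> int" where
  "round_hu f = \<lfloor>f + 1/2\<rfloor>"

definition j0 :: "nat \<Rightarrow> nat \<Rightarrow> nat \<Rightarrow> nat \<Rightarrow> int" where
  "j0 r m l z = round_hu (2 ^ (m + l) * real z / real r)"

definition alpha0 :: "nat \<Rightarrow> nat \<Rightarrow> nat \<Rightarrow> nat \<Rightarrow> int" where
  "alpha0 r m l z = int r * j0 r m l z - 2 ^ (m + l) * int z"

definition lattice2 :: "real \<times> real \<Rightarrow> real \<times> real \<Rightarrow> (real \<times> real) set" where
  "lattice2 b1 b2 = {of_int a *\<^sub>R b1 + of_int b *\<^sub>R b2 | a b. True}"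

end

theory Submission
  imports Defs
begin

lemma alpha_bound:
  assumes "r > 0"
  shows "\<bar>real_of_int (alpha0 r m l z)\<bar> \<le> real r / 2"
proof -
  define y where "y = 2 ^ (m + l) * real z / real r"
  have fl1: "real_of_int \<lfloor>y + 1/2\<rfloor> \<le> y + 1/2" by linarith
  have fl2: "real_of_int \<lfloor>y + 1/2\<rfloor> > y - 1/2" by linarith
  have ry: "real r * y = 2 ^ (m + l) * real z" using assms unfolding y_def by simp
  have a: "real_of_int (alpha0 r m l z) = real r * real_of_int \<lfloor>y + 1/2\<rfloor> - 2 ^ (m + l) * real z"
    unfolding alpha0_def j0_def round_hu_def y_def by simp
  have "real r * real_of_int \<lfloor>y + 1/2\<rfloor> \<le> real r * (y + 1/2)"
    using fl1 assms by (intro mult_left_mono) auto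
  moreover have "real r * real_of_int \<lfloor>y + 1/2\<rfloor> \<ge> real r * (y - 1/2)"
    using fl2 assms by (intro mult_left_mono) auto
  ultimately show ?thesis using a ry by (simp add: algebra_simps abs_le_iff)
qed

theorem lemma7:
  fixes r m l z :: nat
  assumes "r \<ge> 2" and "m > 0" and "l > 0"
    and "2 ^ m > r" and "2 ^ (m + l) > r ^ 2" and "z < r"
  defines "L \<equiv> lattice2 (real_of_int (j0 r m l z), 1/2) (2 ^ (m + l), 0)"
    and "u \<equiv> (real_of_int (alpha0 r m l z) / real (gcd r z), real (r div gcd r z) / 2)"
  shows "u \<in> L \<and> u \<noteq> 0
    \<and> (\<forall>v\<in>L. v \<noteq> 0 \<and> v \<noteq> u \<and> v \<noteq> - u \<longrightarrow> norm u < norm v)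
    \<and> snd u = real r / (2 * real (gcd r z))"
proof -
  define d where "d = gcd r z"
  define rt where "rt = r div d"
  define zt where "zt = z div d"
  define N :: real where "N = 2 ^ (m + l)"
  define j where "j = j0 r m l z"
  define al where "al = alpha0 r m l z"
  have dpos: "d > 0" using assms(1) unfolding d_def by simp
  have rr: "r = rt * d" unfolding rt_def d_def by simp
  have zz: "z = zt * d" unfolding zt_def d_def by simp
  have rtpos: "rt > 0" using rr assms(1) by (cases rt) auto
  have cop: "coprime rt zt" unfolding rt_def zt_def d_def
    using assms(1) by (intro div_gcd_coprime) auto
  have alj: "real_of_int al = real r * real_of_int j - N * real z"
    unfolding al_def j_def alpha0_def N_def by simp
  have ueq: "u = (real_of_int al / real d, real rt / 2)"
    unfolding u_def al_def d_def rt_def by simp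
  have Lchar: "\<And>v. v \<in> L \<longleftrightarrow> (\<exists>a b::int. v = (real_of_int a * real_of_int j + real_of_int b * N, real_of_int a / 2))"
    unfolding L_def lattice2_def j_def N_def by auto
  have aldiv: "real_of_int al / real d = real rt * real_of_int j + (- real zt) * N"
      using alj dpos unfolding rr zz by (simp add: field_simps)
  have uL: "u \<in> L"
  proof -
    have "real_of_int al / real d = real rt * real_of_int j + (- real zt) * N"
      using alj dpos unfolding rr zz by (simp add: field_simps)
    then show ?thesis unfolding Lchar ueq
      by (intro exI[of _ "int rt"] exI[of _ "- int zt"]) simp
  qed
  have un0: "u \<noteq> 0" using rtpos unfolding ueq by (simp add: zero_prod_def)
  have snd: "snd u = real r / (2 * real (gcd r z))"
    unfolding ueq d_def[symmetric] using dpos rr by (simp add: field_simps)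
  have nu2: "(norm u)^2 = (real_of_int al / real d)^2 + (real rt / 2)^2"
    unfolding ueq by (simp add: norm_Pair power_divide)
  have albd: "\<bar>real_of_int al\<bar> \<le> real r / 2" unfolding al_def
    using alpha_bound assms(1) by simp
  have "\<bar>real_of_int al / real d\<bar> \<le> real rt / 2"
    using albd dpos unfolding rr by (simp add: field_simps abs_divide)
  then have "\<bar>real_of_int al / real d\<bar>^2 \<le> (real rt / 2)^2"
    by (rule power_mono) simp
  then have "(real_of_int al / real d)^2 \<le> (real rt / 2)^2" by (simp only: power2_abs)
  hence nu_bd: "(norm u)^2 \<le> (real rt)^2 / 2" using nu2 by (simp add: power_divide)
  have "rt \<le> r" using rr dpos by simp
  hence rtr: "real rt \<le> real r" by simp
  have Nbig: "N > (real r)^2" unfolding N_def using assms(5)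
    by (metis of_nat_less_iff of_nat_numeral of_nat_power)
  have main: "v = 0 \<or> v = u \<or> v = - u" if vL: "v \<in> L" and vle: "norm v \<le> norm u" for v
  proof -
    obtain a b :: int where v: "v = (real_of_int a * real_of_int j + real_of_int b * N, real_of_int a / 2)"
      using vL unfolding Lchar by blast
    define X where "X = real_of_int a * real_of_int j + real_of_int b * N"
    define k where "k = a * int z + b * int r"
    have key: "real r * X = N * real_of_int k + real_of_int a * real_of_int al"
      unfolding X_def k_def alj by (simp add: algebra_simps)
    have nv2: "(norm v)^2 = X^2 + (real_of_int a / 2)^2"
      unfolding v X_def by (simp add: norm_Pair power_divide)
    have "(norm v)^2 \<le> (norm u)^2" using vle by (simp add: power_mono)
    hence vb: "X^2 + (real_of_int a / 2)^2 \<le> (real rt)^2 / 2" using nv2 nu_bd by linarith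
    show ?thesis
    proof (cases "k = 0")
      case False
      have k1: "1 \<le> \<bar>real_of_int k\<bar>" using False by linarith
      have "N \<ge> 0" unfolding N_def by simp
      hence "N * 1 \<le> N * \<bar>real_of_int k\<bar>" using k1 by (intro mult_left_mono)
      hence "N \<le> N * \<bar>real_of_int k\<bar>" by simp
      also have "\<dots> = \<bar>real r * X - real_of_int a * real_of_int al\<bar>" using key \<open>N \<ge> 0\<close>
        by (simp add: abs_mult)
      also have "\<dots> \<le> real r * \<bar>X\<bar> + \<bar>real_of_int a\<bar> * \<bar>real_of_int al\<bar>"
        using abs_triangle_ineq4[of "real r * X" "real_of_int a * real_of_int al"]
        by (simp add: abs_mult)
      also have "\<dots> \<le> real r * \<bar>X\<bar> + \<bar>real_of_int a\<bar> * (real r / 2)"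
        using albd by (intro add_left_mono mult_left_mono) auto
      also have "\<dots> = real r * (\<bar>X\<bar> + \<bar>real_of_int a\<bar> / 2)" by (simp add: algebra_simps)
      finally have c1: "N \<le> real r * (\<bar>X\<bar> + \<bar>real_of_int a\<bar> / 2)" .
      have "(\<bar>X\<bar> + \<bar>real_of_int a\<bar> / 2)^2 \<le> 2 * (X^2 + (real_of_int a / 2)^2)"
      proof -
        have "0 \<le> (\<bar>X\<bar> - \<bar>real_of_int a\<bar> / 2)^2" by simp
        thus ?thesis by (simp add: power2_eq_square algebra_simps)
      qed
      also have "\<dots> \<le> (real rt)^2" using vb by simp
      also have "\<dots> \<le> (real r)^2" using rtr by (simp add: power_mono)
      finally have "\<bar>X\<bar> + \<bar>real_of_int a\<bar> / 2 \<le> real r"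
        by (rule power2_le_imp_le) simp
      hence "real r * (\<bar>X\<bar> + \<bar>real_of_int a\<bar> / 2) \<le> real r * real r"
        by (intro mult_left_mono) auto
      with c1 Nbig show ?thesis by (simp add: power2_eq_square)
    next
      case True
      hence "(a * int zt) * int d = (- b * int rt) * int d"
        unfolding k_def rr zz by (simp add: algebra_simps)
      hence eq: "a * int zt = - b * int rt" using dpos by (simp only: mult_right_cancel)
      hence "int rt dvd a * int zt" by simp
      moreover have "coprime (int rt) (int zt)" using cop by simp
      ultimately have "int rt dvd a" using coprime_dvd_mult_left_iff by blast
      then obtain t where t: "a = int rt * t" by blast
      have "(- t * int zt) * int rt = b * int rt" using eq t by (simp add: algebra_simps)
      hence bt: "b = - t * int zt" using rtpos by (simp only: mult_right_cancel)
      have vt: "v = real_of_int t *\<^sub>R u"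
      proof -
        have "real_of_int a * real_of_int j + real_of_int b * N = real_of_int t * (real_of_int al / real d)"
          unfolding aldiv t bt by (simp add: algebra_simps)
        moreover have "real_of_int a / 2 = real_of_int t * (real rt / 2)" unfolding t by simp
        ultimately show ?thesis unfolding v ueq by simp
      qed
      have "norm v = \<bar>real_of_int t\<bar> * norm u" unfolding vt by simp
      hence "\<bar>real_of_int t\<bar> \<le> 1" using vle un0 by (simp add: mult_le_cancel_right2)
      hence "t = 0 \<or> t = 1 \<or> t = -1" by linarith
      thus ?thesis unfolding vt by auto
    qed
  qed
  have "\<forall>v\<in>L. v \<noteq> 0 \<and> v \<noteq> u \<and> v \<noteq> - u \<longrightarrow> norm u < norm v"
    using main by force
  with uL un0 snd show ?thesis by blast
qed

end
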